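(* Let $P_n(x)=\sum_{k=0}^{n}\frac{(q^{-n},q^{n+3};q)_k\,(q(1+(q-1)x);q)_k\,q^k}{(q,q^2,q^2;q)_k}$ for $n\ge 0$ (the $q$-Hahn type family ${}_3\phi_2\!\left(q^{-n},q^{c+d+n+1},q(1+(q-1)x);q^{c+1},q^{d+1};q,q\right)$ with $c=d=1$). Then the sequence $(\beta_{n+2}/\beta_2)_{n\ge0}$ is the sequence of moments of the orthogonal polynomials $(P_n)_{n\ge0}$.
   Context: $q$ is an indeterminate; we work over $\mathbb{Q}(q)$. The $q$-Bernoulli–Carlitz numbers $\beta_n\in\mathbb{Q}(q)$ are defined by: for all $n\ge0$, $q\sum_{k=0}^{n}\binom{n}{k}q^k\beta_k-\beta_n$ equals $q-1$ if $n=0$, $1$ if $n=1$, and $0$ if $n>1$ (so $\beta_0=1$, $\beta_2=q/((q+1)(q^2+q+1))$). The $q$-Pochhammer symbol is $(a;q)_k=(1-a)(1-qa)\cdots(1-q^{k-1}a)$ and $(a_1,\dots,a_r;q)_k=\prod_i(a_i;q)_k$. A sequence $(m_n)_{n\ge0}$ with $m_0=1$ is called the sequence of moments of a family of polynomials $(P_n)_{n\ge0}$ ($\deg P_n=n$) if the linear functional $L$ on $\mathbb{Q}(q)[x]$ with $L(x^n)=m_n$ satisfies $L(P_mP_n)=0$ for $m\ne n$ and $L(P_n^2)\neq0$. *)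

theory Defs
  imports "HOL-Computational_Algebra.Polynomial" "HOL-Computational_Algebra.Fraction_Field"
begin

type_synonym qf = "rat poly fract"

definition qq :: qf where
  "qq = Fract [:0, 1:] 1"

definition qpoch :: "'a::comm_ring_1 \<Rightarrow> 'a \<Rightarrow> nat \<Rightarrow> 'a" where
  "qpoch a q k = (\<Prod>i<k. (1 - q ^ i * a))"

definition moment_functional :: "(nat \<Rightarrow> 'a::comm_ring_1) \<Rightarrow> 'a poly \<Rightarrow> 'a" where
  "moment_functional m p = (\<Sum>i\<le>degree p. coeff p i * m i)"

definition is_moment_sequence :: "(nat \<Rightarrow> 'a::field) \<Rightarrow> (nat \<Rightarrow> 'a poly) \<Rightarrow> bool" where
  "is_moment_sequence m P \<longleftrightarrow>
     m 0 = 1 \<and> (\<forall>n. degree (P n) = n) \<and>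
     (\<forall>i j. i \<noteq> j \<longrightarrow> moment_functional m (P i * P j) = 0) \<and>
     (\<forall>n. moment_functional m (P n * P n) \<noteq> 0)"

definition P_qhahn :: "nat \<Rightarrow> qf poly" where
  "P_qhahn n = (\<Sum>k\<le>n.
      smult (qpoch (inverse qq ^ n) qq k * qpoch (qq ^ (n + 3)) qq k * qq ^ k /
             (qpoch qq qq k * qpoch (qq ^ 2) qq k * qpoch (qq ^ 2) qq k))
        (qpoch [:qq, qq * (qq - 1):] [:qq:] k))"

end

theory Submission
  imports Defs
begin


lemma qq_pow: "qq ^ k = Fract (monom 1 k) 1"
proof (induct k)
  case 0 then show ?case by (simp add: One_fract_def)
next
  case (Suc k)
  have "monom (1::rat) (Suc k) = [:0,1:] * monom 1 k"
    by (simp add: monom_altdef)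
  then show ?case using Suc by (simp add: qq_def)
qed
lemma qq_pow_ne1: "k > 0 \<Longrightarrow> qq ^ k \<noteq> 1"
  by (simp add: qq_pow One_fract_def eq_fract monom_eq_1_iff)
lemma qq_nz[simp]: "qq \<noteq> 0"
  by (simp add: qq_def Zero_fract_def eq_fract)



lemma mf_eq: "degree p \<le> N \<Longrightarrow> moment_functional m p = (\<Sum>i\<le>N. coeff p i * m i)"
  unfolding moment_functional_def
  by (rule sum.mono_neutral_left) (auto simp: coeff_eq_0)

lemma mf_add: "moment_functional m (p + r) = moment_functional m p + moment_functional m r"
proof -
  let ?N = "max (degree p) (degree r)"
  have "degree (p + r) \<le> ?N" by (rule degree_add_le) auto
  then show ?thesis
    by (simp add: mf_eq[of _ ?N] mf_eq[of p ?N] mf_eq[of r ?N] distrib_right sum.distrib)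
qed

lemma mf_smult: "moment_functional m (smult c p) = c * moment_functional m p"
  by (subst mf_eq[of _ "degree p"]) (auto simp: sum_distrib_left mult.assoc moment_functional_def degree_smult_le)

lemma mf_minus: "moment_functional m (- p) = - moment_functional m p"
  using mf_smult[of m "-1" p] by simp

lemma mf_diff: "moment_functional m (p - r) = moment_functional m p - moment_functional m r"
  using mf_add[of m p "-r"] mf_minus[of m r] by simp

lemma mf_0[simp]: "moment_functional m 0 = 0"
  by (simp add: moment_functional_def)

lemma mf_sum: "moment_functional m (\<Sum>i\<in>S. f i) = (\<Sum>i\<in>S. moment_functional m (f i))"
  by (induct S rule: infinite_finite_induct) (auto simp: mf_add)

lemma mf_monom: "moment_functional m (monom c n) = c * m n"
proof -
  have "(\<Sum>i\<le>n. coeff (monom c n) i * m i) = (\<Sum>i\<le>n. if i = n then c * m n else 0)"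
    by (rule sum.cong) (auto simp: coeff_monom)
  then show ?thesis by (simp add: mf_eq[of _ n] degree_monom_le)
qed

lemma mf_1: "moment_functional m 1 = m 0"
  using mf_monom[of m 1 0] by (simp add: one_pCons)



lemma pcompose_X_pow: "pcompose ([:0,1:] ^ n) r = r ^ n"
  by (induct n) (simp_all add: pcompose_pCons pcompose_1)

lemma pcompose_monom: "pcompose (monom c n) r = smult c (r ^ n)"
  by (simp add: monom_altdef pcompose_smult pcompose_X_pow)

lemma lin_pow: "[:1, c:] ^ n = (\<Sum>k\<le>n. monom (of_nat (n choose k) * c ^ k) k)"
proof -
  have "[:1, c:] = monom c 1 + 1" by (simp add: monom_Suc one_pCons monom_0)
  then have "[:1, c:] ^ n = (\<Sum>k\<le>n. of_nat (n choose k) * monom c 1 ^ k * 1 ^ (n - k))"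
    by (simp add: binomial_ring)
  also have "\<dots> = (\<Sum>k\<le>n. monom (of_nat (n choose k) * c ^ k) k)"
    by (rule sum.cong) (auto simp: monom_power of_nat_poly smult_monom)
  finally show ?thesis .
qed

lemma pderiv_sum: "pderiv (\<Sum>i\<in>S. f i) = (\<Sum>i\<in>S. pderiv (f i))"
  by (induct S rule: infinite_finite_induct) (auto simp: pderiv_add)

context
  fixes \<beta> :: "nat \<Rightarrow> qf"
  assumes H: "\<forall>n. qq * (\<Sum>k\<le>n. of_nat (n choose k) * qq ^ k * \<beta> k) - \<beta> n =
              (if n = 0 then qq - 1 else if n = 1 then 1 else 0)"
begin

lemma FE_monom:
  "qq * moment_functional \<beta> (pcompose (monom c n) [:1, qq:]) - moment_functional \<beta> (monom c n)
   = (qq - 1) * poly (monom c n) 0 + poly (pderiv (monom c n)) 0"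
proof -
  define S where "S = (\<Sum>k\<le>n. of_nat (n choose k) * qq ^ k * \<beta> k)"
  define r :: qf where "r = (if n = 0 then qq - 1 else if n = 1 then 1 else 0)"
  have m: "moment_functional \<beta> (pcompose (monom c n) [:1, qq:]) = c * S"
    unfolding S_def by (simp add: pcompose_monom lin_pow mf_smult mf_sum mf_monom)
  have h: "qq * S - \<beta> n = r" using H unfolding S_def r_def by blast
  have "qq * moment_functional \<beta> (pcompose (monom c n) [:1, qq:]) - moment_functional \<beta> (monom c n)
     = c * (qq * S - \<beta> n)"
    by (simp add: m mf_monom algebra_simps)
  also have "\<dots> = c * r" by (simp add: h)
  also have "c * r = (qq - 1) * poly (monom c n) 0 + poly (pderiv (monom c n)) 0"
  proof (cases n)
    case 0 then show ?thesis by (simp add: poly_monom pderiv_monom r_def)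
  next
    case (Suc k) then show ?thesis by (cases k) (simp_all add: poly_monom pderiv_monom r_def)
  qed
  finally show ?thesis .
qed

lemma FE:
  "qq * moment_functional \<beta> (pcompose g [:1, qq:]) - moment_functional \<beta> g
   = (qq - 1) * poly g 0 + poly (pderiv g) 0"
proof -
  let ?S = "{..degree g}"
  have g: "g = (\<Sum>i\<in>?S. monom (coeff g i) i)" by (simp add: poly_as_sum_of_monoms)
  have "qq * moment_functional \<beta> (pcompose g [:1, qq:]) - moment_functional \<beta> g
      = (\<Sum>i\<in>?S. qq * moment_functional \<beta> (pcompose (monom (coeff g i) i) [:1, qq:]) - moment_functional \<beta> (monom (coeff g i) i))"
    by (subst (1 2) g) (simp add: pcompose_sum mf_sum sum_distrib_left sum_subtractf)
  also have "\<dots> = (\<Sum>i\<in>?S. (qq - 1) * poly (monom (coeff g i) i) 0 + poly (pderiv (monom (coeff g i) i)) 0)"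
    by (simp add: FE_monom)
  also have "\<dots> = (qq - 1) * poly g 0 + poly (pderiv g) 0"
    by (subst (3 4) g) (simp add: poly_sum pderiv_sum sum.distrib sum_distrib_left)
  finally show ?thesis .
qed
end



lemma qpoch_0[simp]: "qpoch a q 0 = 1" by (simp add: qpoch_def)
lemma qpoch_Suc: "qpoch a q (Suc k) = qpoch a q k * (1 - q ^ k * a)"
  by (simp add: qpoch_def)
lemma qpoch_Suc': "qpoch a q (Suc k) = (1 - a) * qpoch (q * a) q k"
  unfolding qpoch_def by (subst prod.lessThan_Suc_shift) (simp add: mult_ac)

definition Y :: "nat \<Rightarrow> qf poly" where "Y k = qpoch [:qq, qq * (qq - 1):] [:qq:] k"
definition Z :: "nat \<Rightarrow> qf poly" where "Z k = qpoch [:1, qq - 1:] [:qq:] k"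

lemma const_pow: "[:c:] ^ i = [:c ^ i:]"
  by (induct i) (auto simp: one_pCons mult_ac)

lemma Z_comp: "pcompose (Z k) [:1, qq:] = Y k"
  unfolding Z_def Y_def qpoch_def
  by (simp add: pcompose_prod pcompose_diff pcompose_1 pcompose_mult const_pow pcompose_pCons algebra_simps)

lemma Z_Suc: "Z (Suc m) = [:0, 1 - qq:] * Y m"
  unfolding Z_def Y_def qpoch_Suc'
  by (simp add: const_pow one_pCons algebra_simps)

lemma poly_Y0: "poly (Y m) 0 = qpoch qq qq m"
  unfolding Y_def qpoch_def by (simp add: poly_prod const_pow mult.commute)

lemma Y_Suc: "Y (Suc m) = Y m * (1 - [:qq ^ m:] * [:qq, qq * (qq - 1):])"
  unfolding Y_def qpoch_Suc by (simp add: const_pow)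

lemma Y_rel: "smult (qq ^ Suc m) ([:0, 1 - qq:] * Y m) = smult (qq ^ Suc m - 1) (Y m) + Y (Suc m)"
  proof -
  have "smult (1 - qq * qq ^ m) (Y m) + smult (qq * qq ^ m - 1) (Y m) = 0"
    by (simp flip: smult_add_left)
  then show ?thesis unfolding Y_Suc by (simp add: one_pCons algebra_simps smult_add_right)
qed




lemma one_minus_qq_pow_nz: "k > 0 \<Longrightarrow> 1 - qq ^ k \<noteq> 0"
  using qq_pow_ne1 by auto

lemma qpoch_qq_nz: "qpoch qq qq m \<noteq> 0"
  unfolding qpoch_def using qq_pow_ne1 by (auto simp: power_Suc2[symmetric] simp del: power_Suc)

context
  fixes \<beta> :: "nat \<Rightarrow> qf"
  assumes H: "\<forall>n. qq * (\<Sum>k\<le>n. of_nat (n choose k) * qq ^ k * \<beta> k) - \<beta> n =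
              (if n = 0 then qq - 1 else if n = 1 then 1 else 0)"
begin

lemma beta0: "\<beta> 0 = 1"
proof -
  have "qq * \<beta> 0 - \<beta> 0 = qq - 1" using H[rule_format, of 0] by simp
  then have "(qq - 1) * (\<beta> 0 - 1) = 0" by (simp add: algebra_simps)
  moreover have "qq - 1 \<noteq> 0" using qq_pow_ne1[of 1] by simp
  ultimately show ?thesis by simp
qed

lemma Lam: "moment_functional \<beta> (Y m) = (1 - qq) * qpoch qq qq m / (1 - qq ^ Suc m)"
proof (induct m)
  case 0
  have "1 - qq \<noteq> 0" using qq_pow_ne1[of 1] by simp
  then show ?case by (simp add: Y_def mf_1 beta0)
next
  case (Suc m)
  define L0 where "L0 = moment_functional \<beta> (Y m)"
  define L1 where "L1 = moment_functional \<beta> (Y (Suc m))"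
  define W where "W = moment_functional \<beta> (Z (Suc m))"
  define P where "P = qpoch qq qq m"
  have fe: "qq * L1 - W = (1 - qq) * P"
  proof -
    have "pderiv (Z (Suc m)) = [:0, 1 - qq:] * pderiv (Y m) + Y m * [:1 - qq:]"
      by (simp add: Z_Suc pderiv_mult pderiv_pCons pderiv_smult)
    then have "poly (pderiv (Z (Suc m))) 0 = (1 - qq) * P"
      by (simp add: poly_Y0 P_def)
    moreover have "poly (Z (Suc m)) 0 = 0" by (simp add: Z_Suc)
    ultimately show ?thesis
      using FE[OF H, of "Z (Suc m)"] by (simp add: Z_comp L1_def W_def)
  qed
  have rel: "qq ^ Suc m * W = (qq ^ Suc m - 1) * L0 + L1"
    using arg_cong[OF Y_rel[of m], of "moment_functional \<beta>"]
    unfolding W_def Z_Suc L0_def L1_def by (simp only: mf_smult mf_add)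
  have l0: "L0 * (1 - qq ^ Suc m) = (1 - qq) * P"
    using Suc one_minus_qq_pow_nz[of "Suc m"] by (simp add: L0_def P_def)
  have "(qq ^ Suc (Suc m) - 1) * L1 = (1 - qq) * P * (qq ^ Suc m - 1)"
  proof -
    have "qq ^ Suc m * (qq * L1 - W) = qq ^ Suc m * ((1 - qq) * P)" using fe by simp
    then have "qq ^ Suc (Suc m) * L1 - ((qq ^ Suc m - 1) * L0 + L1) = qq ^ Suc m * ((1 - qq) * P)"
      using rel by (simp add: algebra_simps)
    then show ?thesis using l0 by (simp add: algebra_simps)
  qed
  moreover have "qq ^ Suc (Suc m) - 1 \<noteq> 0" using qq_pow_ne1[of "Suc (Suc m)"] by simp
  ultimately have "L1 = (1 - qq) * P * (qq ^ Suc m - 1) / (qq ^ Suc (Suc m) - 1)"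
    by (simp add: field_simps)
  also have "\<dots> = (1 - qq) * qpoch qq qq (Suc m) / (1 - qq ^ Suc (Suc m))"
    unfolding P_def qpoch_Suc
    by (simp add: divide_simps algebra_simps)
  finally show ?case by (simp add: L1_def)
qed

end



lemma qpoch_shift: "qpoch (qq ^ Suc j) qq k * (1 - qq ^ j) = qpoch (qq ^ j) qq k * (1 - qq ^ (k + j))"
proof -
  have "qpoch (qq ^ j) qq (Suc k) = (1 - qq ^ j) * qpoch (qq * qq ^ j) qq k" by (rule qpoch_Suc')
  moreover have "qpoch (qq ^ j) qq (Suc k) = qpoch (qq ^ j) qq k * (1 - qq ^ k * qq ^ j)" by (rule qpoch_Suc)
  ultimately show ?thesis by (simp add: power_add mult.commute)
qed

lemma mf_shift2: fixes \<beta> :: "nat \<Rightarrow> 'a::field" shows "moment_functional (\<lambda>n. \<beta> (n + 2) / \<beta> 2) p = moment_functional \<beta> (monom 1 2 * p) / \<beta> 2"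
proof -
  let ?S = "{..degree p}"
  have g: "p = (\<Sum>i\<in>?S. monom (coeff p i) i)" by (simp add: poly_as_sum_of_monoms)
  have "moment_functional (\<lambda>n. \<beta> (n + 2) / \<beta> 2) p = (\<Sum>i\<in>?S. coeff p i * (\<beta> (i + 2) / \<beta> 2))"
    by (subst g) (simp add: mf_sum mf_monom sum_divide_distrib)
  also have "\<dots> = (\<Sum>i\<in>?S. moment_functional \<beta> (monom 1 2 * monom (coeff p i) i) / \<beta> 2)"
    by (rule sum.cong) (simp_all add: mult_monom mf_monom times_divide_eq_right)
  also have "\<dots> = (\<Sum>i\<in>?S. moment_functional \<beta> (monom 1 2 * monom (coeff p i) i)) / \<beta> 2"
    by (simp add: sum_divide_distrib)
  also have "\<dots> = moment_functional \<beta> (monom 1 2 * p) / \<beta> 2"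
    by (subst (3) g) (simp add: sum_distrib_left mf_sum)
  finally show ?thesis .
qed

definition T :: "qf poly" where "T = [:0, 1 - qq:]"

lemma TT: "T * T = smult ((1 - qq)^2) (monom 1 2)"
  by (rule poly_eqI) (auto simp: T_def coeff_monom coeff_pCons power2_eq_square numeral_2_eq_2 split: nat.split)

lemma V_alg:
  fixes q u P L0 L1 L2 :: "'a::field"
  assumes "1 - q*u \<noteq> 0" "1 - q*(q*u) \<noteq> 0" "1 - q*(q*(q*u)) \<noteq> 0" "u \<noteq> 0" "q \<noteq> 0"
    and "L0 = (1-q)*P/(1-q*u)" "L1 = (1-q)*(P*(1-q*u))/(1-q*(q*u))"
    "L2 = (1-q)*(P*(1-q*u)*(1-q*(q*u)))/(1-q*(q*(q*u)))"
  shows "((q*u - 1) * (((q*u - 1) * L0 + L1) / (q*u))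
          + ((q*(q*u) - 1) * L1 + L2) / (q*(q*u))) / (q*u)
       = q * (1-q)^3 * P * (1 - q*u) / ((1 - q*(q*u)) * (1 - q*(q*(q*u))))"
  using assms(1-5) unfolding assms(6-8) by (simp add: divide_simps) (simp add: algebra_simps power3_eq_cube)

context
  fixes \<beta> :: "nat \<Rightarrow> qf"
  assumes H: "\<forall>n. qq * (\<Sum>k\<le>n. of_nat (n choose k) * qq ^ k * \<beta> k) - \<beta> n =
              (if n = 0 then qq - 1 else if n = 1 then 1 else 0)"
begin

lemma M1: "moment_functional \<beta> (T * Y k) =
   ((qq ^ Suc k - 1) * moment_functional \<beta> (Y k) + moment_functional \<beta> (Y (Suc k))) / qq ^ Suc k"
proof -
  have "qq ^ Suc k * moment_functional \<beta> (T * Y k) =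
     (qq ^ Suc k - 1) * moment_functional \<beta> (Y k) + moment_functional \<beta> (Y (Suc k))"
    using arg_cong[OF Y_rel[of k], of "moment_functional \<beta>"]
    unfolding T_def by (simp only: mf_smult mf_add)
  then show ?thesis by (simp add: field_simps)
qed

lemma V: "moment_functional \<beta> (T * T * Y k) =
   qq * (1 - qq) ^ 3 * qpoch qq qq k * (1 - qq ^ Suc k) / ((1 - qq ^ Suc (Suc k)) * (1 - qq ^ Suc (Suc (Suc k))))"
proof -
  have r: "smult (qq ^ Suc k) (T * T * Y k) = T * (smult (qq ^ Suc k - 1) (Y k) + Y (Suc k))"
    using arg_cong[OF Y_rel[of k], of "\<lambda>p. T * p"] unfolding T_def by (simp add: mult_ac)
  have "qq ^ Suc k * moment_functional \<beta> (T * T * Y k) =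
     (qq ^ Suc k - 1) * moment_functional \<beta> (T * Y k) + moment_functional \<beta> (T * Y (Suc k))"
    using arg_cong[OF r, of "moment_functional \<beta>"]
    by (simp only: mf_smult mf_add distrib_left mult_smult_right)
  then have e: "moment_functional \<beta> (T * T * Y k) = ((qq ^ Suc k - 1) * moment_functional \<beta> (T * Y k) + moment_functional \<beta> (T * Y (Suc k))) / qq ^ Suc k"
    by (simp add: field_simps)
  define u where "u = qq ^ k"
  define P where "P = qpoch qq qq k"
  have p1: "qq ^ Suc k = qq * u" and p2: "qq ^ Suc (Suc k) = qq * (qq * u)"
    and p3: "qq ^ Suc (Suc (Suc k)) = qq * (qq * (qq * u))" by (simp_all add: u_def)
  have nz: "1 - qq * u \<noteq> 0" "1 - qq * (qq * u) \<noteq> 0" "1 - qq * (qq * (qq * u)) \<noteq> 0" "u \<noteq> 0"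
    using one_minus_qq_pow_nz[of "Suc k"] one_minus_qq_pow_nz[of "Suc (Suc k)"]
      one_minus_qq_pow_nz[of "Suc (Suc (Suc k))"] by (auto simp: u_def)
  have L0: "moment_functional \<beta> (Y k) = (1-qq)*P/(1-qq*u)"
    using Lam[OF H, of k] by (simp add: P_def u_def)
  have L1: "moment_functional \<beta> (Y (Suc k)) = (1-qq)*(P*(1-qq*u))/(1-qq*(qq*u))"
    using Lam[OF H, of "Suc k"] by (simp add: P_def u_def qpoch_Suc mult.commute)
  have L2: "moment_functional \<beta> (Y (Suc (Suc k))) = (1-qq)*(P*(1-qq*u)*(1-qq*(qq*u)))/(1-qq*(qq*(qq*u)))"
    using Lam[OF H, of "Suc (Suc k)"] by (simp add: P_def u_def qpoch_Suc mult.commute)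
  show ?thesis
    unfolding e M1 p1 p2 p3 P_def[symmetric]
    by (rule V_alg[OF nz qq_nz L0 L1 L2])
qed

end



lemma Y0: "Y 0 = 1" by (simp add: Y_def)

context
  fixes \<beta> :: "nat \<Rightarrow> qf"
  assumes H: "\<forall>n. qq * (\<Sum>k\<le>n. of_nat (n choose k) * qq ^ k * \<beta> k) - \<beta> n =
              (if n = 0 then qq - 1 else if n = 1 then 1 else 0)"
begin

lemma x2Y: "moment_functional \<beta> (monom 1 2 * Y k) = moment_functional \<beta> (T * T * Y k) / (1 - qq)^2"
proof -
  have "1 - qq \<noteq> 0" using qq_pow_ne1[of 1] by simp
  then have "monom 1 2 * Y k = smult (1 / (1 - qq)^2) (T * T * Y k)"
    by (simp add: TT)
  then show ?thesis by (simp add: mf_smult)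
qed

lemma beta2: "\<beta> 2 = qq * (1 - qq) ^ 3 * (1 - qq) / ((1 - qq ^ 2) * (1 - qq ^ 3)) / (1 - qq)^2"
proof -
  have "\<beta> 2 = moment_functional \<beta> (monom 1 2 * Y 0)" by (simp add: Y0 mf_monom)
  also have "\<dots> = qq * (1 - qq) ^ 3 * (1 - qq) / ((1 - qq ^ 2) * (1 - qq ^ 3)) / (1 - qq)^2"
    unfolding x2Y V[OF H] by (simp add: numeral_2_eq_2 numeral_3_eq_3)
  finally show ?thesis .
qed

lemma beta2_nz: "\<beta> 2 \<noteq> 0"
  unfolding beta2 using one_minus_qq_pow_nz[of 1] one_minus_qq_pow_nz[of 2] one_minus_qq_pow_nz[of 3]
  by simp

lemma cY: "moment_functional (\<lambda>n. \<beta> (n + 2) / \<beta> 2) (Y k) = qpoch (qq ^ 2) qq k ^ 2 / qpoch (qq ^ 4) qq k"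
proof -
  define P where "P = qpoch qq qq k"
  define u where "u = qq ^ k"
  have a2: "qpoch (qq ^ 2) qq k * (1 - qq) = P * (1 - qq * u)"
    using qpoch_shift[of 1 k] by (simp add: P_def u_def mult.commute power2_eq_square)
  have a3: "qpoch (qq ^ 3) qq k * (1 - qq ^ 2) = qpoch (qq ^ 2) qq k * (1 - qq * (qq * u))"
  proof -
    have e: "Suc 2 = 3" by simp
    have p: "qq ^ (k + 2) = qq * (qq * u)" by (simp add: u_def power_add eval_nat_numeral mult_ac)
    show ?thesis using qpoch_shift[of 2 k] unfolding e p .
  qed
  have a4: "qpoch (qq ^ 4) qq k * (1 - qq ^ 3) = qpoch (qq ^ 3) qq k * (1 - qq * (qq * (qq * u)))"
  proof -
    have e: "Suc 3 = 4" by simp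
    have p: "qq ^ (k + 3) = qq * (qq * (qq * u))" by (simp add: u_def power_add eval_nat_numeral mult_ac)
    show ?thesis using qpoch_shift[of 3 k] unfolding e p .
  qed
  have nz: "1 - qq \<noteq> 0" "1 - qq^2 \<noteq> 0" "1 - qq^3 \<noteq> 0" "1 - qq * u \<noteq> 0" "1 - qq * (qq * u) \<noteq> 0" "1 - qq * (qq * (qq * u)) \<noteq> 0"
    using one_minus_qq_pow_nz[of 1] one_minus_qq_pow_nz[of 2] one_minus_qq_pow_nz[of 3]
      one_minus_qq_pow_nz[of "Suc k"] one_minus_qq_pow_nz[of "Suc (Suc k)"]
      one_minus_qq_pow_nz[of "Suc (Suc (Suc k))"] by (auto simp: u_def)
  have A2: "qpoch (qq ^ 2) qq k = P * (1 - qq * u) / (1 - qq)"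
    using a2 nz by (simp add: eq_divide_eq)
  have A3: "qpoch (qq ^ 3) qq k = qpoch (qq ^ 2) qq k * (1 - qq * (qq * u)) / (1 - qq^2)"
    using a3 nz by (simp add: eq_divide_eq)
  have A4: "qpoch (qq ^ 4) qq k = qpoch (qq ^ 3) qq k * (1 - qq * (qq * (qq * u))) / (1 - qq^3)"
    using a4 nz by (simp add: eq_divide_eq)
  have "moment_functional (\<lambda>n. \<beta> (n + 2) / \<beta> 2) (Y k) =
     (qq * (1 - qq) ^ 3 * P * (1 - qq * u) / ((1 - qq * (qq * u)) * (1 - qq * (qq * (qq * u))))) /
     (qq * (1 - qq) ^ 3 * (1 - qq) / ((1 - qq ^ 2) * (1 - qq ^ 3)))"
    apply (simp only: mf_shift2 x2Y V[OF H])
    apply (subst beta2)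
    using nz by (simp add: P_def u_def)
  also have "\<dots> = qpoch (qq ^ 2) qq k ^ 2 / qpoch (qq ^ 4) qq k"
    unfolding A4 A3 A2 using nz qpoch_qq_nz[of k] by (simp add: divide_simps P_def[symmetric]) (simp add: algebra_simps power2_eq_square power3_eq_cube)
  finally show ?thesis .
qed

end



lemma qpoch_nz_gen: "(\<And>i. i < k \<Longrightarrow> 1 - q ^ i * a \<noteq> 0) \<Longrightarrow> qpoch a q k \<noteq> (0::'a::field)"
  unfolding qpoch_def by auto

lemma qpoch_qqpow_nz: "j > 0 \<Longrightarrow> qpoch (qq ^ j) qq k \<noteq> 0"
  by (rule qpoch_nz_gen) (metis one_minus_qq_pow_nz power_add add_gr_0)

lemma gosper:
  fixes a b q :: "'a::field"
  assumes q1: "\<And>i. 1 - q ^ Suc i \<noteq> 0" and q2: "\<And>i. 1 - q ^ i * (a * b * q) \<noteq> 0"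
  shows "(\<Sum>k\<le>K. qpoch a q k * qpoch b q k * q ^ k / (qpoch q q k * qpoch (a * b * q) q k))
       = qpoch (q * a) q K * qpoch (q * b) q K / (qpoch q q K * qpoch (a * b * q) q K)"
proof (induct K)
  case 0 then show ?case by simp
next
  case (Suc K)
  define A where "A = qpoch (q * a) q K"
  define B where "B = qpoch (q * b) q K"
  define Q where "Q = qpoch q q K"
  define C where "C = qpoch (a * b * q) q K"
  define u where "u = q ^ K"
  have Qnz: "Q \<noteq> 0" unfolding Q_def by (rule qpoch_nz_gen) (metis q1 power_Suc2)
  have Cnz: "C \<noteq> 0" unfolding C_def by (rule qpoch_nz_gen) (use q2 in auto)
  have n1: "1 - u * q \<noteq> 0" using q1[of K] by (simp add: u_def mult.commute)
  have n2: "1 - u * (a * b * q) \<noteq> 0" using q2[of K] by (simp add: u_def)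
  have "(\<Sum>k\<le>Suc K. qpoch a q k * qpoch b q k * q ^ k / (qpoch q q k * qpoch (a * b * q) q k))
     = A * B / (Q * C) + (1 - a) * A * ((1 - b) * B) * (u * q) / (Q * (1 - u * q) * (C * (1 - u * (a * b * q))))"
  proof -
    have ea: "qpoch a q (Suc K) = (1 - a) * A" unfolding A_def by (rule qpoch_Suc')
    have eb: "qpoch b q (Suc K) = (1 - b) * B" unfolding B_def by (rule qpoch_Suc')
    have eq: "qpoch q q (Suc K) = Q * (1 - u * q)" unfolding Q_def u_def by (rule qpoch_Suc)
    have ec: "qpoch (a * b * q) q (Suc K) = C * (1 - u * (a * b * q))" unfolding C_def u_def by (rule qpoch_Suc)
    have eu: "q ^ Suc K = u * q" by (simp add: u_def)
    show ?thesis
      unfolding sum.atMost_Suc Suc ea eb eq ec eu A_def[symmetric] B_def[symmetric] Q_def[symmetric] C_def[symmetric] ..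
  qed
  also have "\<dots> = A * (1 - u * (q * a)) * (B * (1 - u * (q * b))) / (Q * (1 - u * q) * (C * (1 - u * (a * b * q))))"
    using Qnz Cnz n1 n2 by (simp add: divide_simps) (simp add: algebra_simps)
  also have "\<dots> = qpoch (q * a) q (Suc K) * qpoch (q * b) q (Suc K) / (qpoch q q (Suc K) * qpoch (a * b * q) q (Suc K))"
    by (simp add: A_def B_def Q_def C_def u_def qpoch_Suc)
  finally show ?case .
qed




lemma qpoch_vanish: "n > 0 \<Longrightarrow> qpoch (qq * inverse qq ^ n) qq n = 0"
  unfolding qpoch_def
proof (rule prod_zero)
  assume n: "n > 0"
  have "qq ^ (n - 1) * (qq * inverse qq ^ n) = qq ^ n * inverse qq ^ n"
  proof -
    obtain m where "n = Suc m" using n by (cases n) auto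
    then show ?thesis by (simp add: mult_ac)
  qed
  also have "\<dots> = 1" by (simp add: power_inverse)
  finally show "\<exists>i\<in>{..<n}. 1 - qq ^ i * (qq * inverse qq ^ n) = 0" using n by (intro bexI[of _ "n - 1"]) auto
qed simp

lemma P_qhahn_Y: "P_qhahn n = (\<Sum>k\<le>n.
      smult (qpoch (inverse qq ^ n) qq k * qpoch (qq ^ (n + 3)) qq k * qq ^ k /
             (qpoch qq qq k * qpoch (qq ^ 2) qq k * qpoch (qq ^ 2) qq k)) (Y k))"
  unfolding P_qhahn_def Y_def ..

context
  fixes \<beta> :: "nat \<Rightarrow> qf"
  assumes H: "\<forall>n. qq * (\<Sum>k\<le>n. of_nat (n choose k) * qq ^ k * \<beta> k) - \<beta> n =
              (if n = 0 then qq - 1 else if n = 1 then 1 else 0)"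
begin

lemma LP0: "n > 0 \<Longrightarrow> moment_functional (\<lambda>n. \<beta> (n + 2) / \<beta> 2) (P_qhahn n) = 0"
proof -
  assume n: "n > 0"
  have ab: "inverse qq ^ n * qq ^ (n + 3) * qq = qq ^ 4"
    by (simp add: power_add power_inverse[symmetric] eval_nat_numeral field_simps del: power_inverse)
  have g: "(\<Sum>k\<le>n. qpoch (inverse qq ^ n) qq k * qpoch (qq ^ (n + 3)) qq k * qq ^ k / (qpoch qq qq k * qpoch (qq ^ 4) qq k))
       = qpoch (qq * inverse qq ^ n) qq n * qpoch (qq * qq ^ (n + 3)) qq n / (qpoch qq qq n * qpoch (qq ^ 4) qq n)"
    using gosper[of qq "inverse qq ^ n" "qq ^ (n + 3)" n] unfolding ab
    using one_minus_qq_pow_nz by (simp add: power_add[symmetric] del: power_Suc)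
  have "moment_functional (\<lambda>n. \<beta> (n + 2) / \<beta> 2) (P_qhahn n) =
     (\<Sum>k\<le>n. qpoch (inverse qq ^ n) qq k * qpoch (qq ^ (n + 3)) qq k * qq ^ k / (qpoch qq qq k * qpoch (qq ^ 4) qq k))"
    unfolding P_qhahn_Y mf_sum mf_smult cY[OF H]
  proof (rule sum.cong)
    fix k
    have "qpoch (qq ^ 2) qq k \<noteq> 0" by (rule qpoch_qqpow_nz) simp
    then show "qpoch (inverse qq ^ n) qq k * qpoch (qq ^ (n + 3)) qq k * qq ^ k /
          (qpoch qq qq k * qpoch (qq ^ 2) qq k * qpoch (qq ^ 2) qq k) *
          (qpoch (qq ^ 2) qq k ^ 2 / qpoch (qq ^ 4) qq k) =
          qpoch (inverse qq ^ n) qq k * qpoch (qq ^ (n + 3)) qq k * qq ^ k / (qpoch qq qq k * qpoch (qq ^ 4) qq k)"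
      by (simp add: power2_eq_square)
  qed simp
  also have "\<dots> = 0" unfolding g qpoch_vanish[OF n] by simp
  finally show ?thesis .
qed

end



lemma rec_red:
  fixes q u t :: "'a::field"
  assumes nz: "q \<noteq> 0" "u \<noteq> 0" "t \<noteq> 0" 
    "1 - q^3*u^2 \<noteq> 0" "1 - q^4*u^2 \<noteq> 0" "1 - q^2*u^2 \<noteq> 0"
  defines "v \<equiv> inverse u"
  defines "A \<equiv> (1-q^2*u)^2*(1-q^3*u)/((1-q^3*u^2)*(1-q^4*u^2))"
  defines "C \<equiv> - (q^3*u*(1-u)*(1-q*u)^2/((1-q^2*u^2)*(1-q^3*u^2)))"
  shows "(inverse (t*q^2) - 1) * ((1-v)*(1-t*q*v)*(1-q^3*u)*(1-t*q^4*u))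
          - (1-v)*(1-q^3*u)*(1-t*q^2)*(1-t*q^3)^2 / (t*q^2)
       = A * ((1-v/q)*(1-v)*(1-t*q^4*u)*(1-t*q^5*u))
         - (A + C) * ((1-v)*(1-t*q*v)*(1-q^3*u)*(1-t*q^4*u))
         + C * ((1-t*q*v)*(1-t*q^2*v)*(1-q^2*u)*(1-q^3*u))"
  unfolding v_def A_def C_def using nz
  by (simp add: divide_simps) algebra

lemma lin3:
  fixes a K x1 x2 x3 y A B C :: "'a::field"
  assumes "a*x2 - y = A*x1 - B*x2 + C*x3"
  shows "a*(K*x2) - K*y = A*(K*x1) - B*(K*x2) + C*(K*x3)"
proof -
  have "a*(K*x2) - K*y = K*(a*x2 - y)" by (simp add: algebra_simps)
  also have "\<dots> = K*(A*x1 - B*x2 + C*x3)" using assms by simp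
  finally show ?thesis by (simp add: algebra_simps)
qed

lemma rec_atoms:
  fixes q u t G1 G2 D1 D2 :: "'a::field"
  assumes nz: "q \<noteq> 0" "u \<noteq> 0" "t \<noteq> 0" "D1 \<noteq> 0" "D2 \<noteq> 0" "1 - t*q \<noteq> 0" "1 - t*q^2 \<noteq> 0" "1 - t*q^3 \<noteq> 0"
    "1 - q^3*u^2 \<noteq> 0" "1 - q^4*u^2 \<noteq> 0" "1 - q^2*u^2 \<noteq> 0"
  defines "v \<equiv> inverse u"
  defines "Den \<equiv> D1*(1-t*q)*(1-t*q^2)*(D2*(1-t*q^2)*(1-t*q^3))^2"
  defines "A \<equiv> (1-q^2*u)^2*(1-q^3*u)/((1-q^3*u^2)*(1-q^4*u^2))"
  defines "C \<equiv> - (q^3*u*(1-u)*(1-q*u)^2/((1-q^2*u^2)*(1-q^3*u^2)))"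
  shows "(inverse (t*q^2) - 1) * ((1-v)*G1*(1-t*q*v)*(1-q^3*u)*G2*(1-t*q^4*u)*(t*q^2)/Den)
          - inverse (t*q) * ((1-v)*G1*(1-q^3*u)*G2*(t*q)/(D1*(1-t*q)*(D2*(1-t*q^2))^2))
       = A * ((1-v/q)*(1-v)*G1*G2*(1-t*q^4*u)*(1-t*q^5*u)*(t*q^2)/Den)
         - (A + C) * ((1-v)*G1*(1-t*q*v)*(1-q^3*u)*G2*(1-t*q^4*u)*(t*q^2)/Den)
         + C * (G1*(1-t*q*v)*(1-t*q^2*v)*(1-q^2*u)*(1-q^3*u)*G2*(t*q^2)/Den)"
proof -
  define K where "K = G1*G2*(t*q^2)/Den"
  have Dnz: "Den \<noteq> 0" unfolding Den_def using nz by simp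
  have e1: "inverse (t*q) * ((1-v)*G1*(1-q^3*u)*G2*(t*q)/(D1*(1-t*q)*(D2*(1-t*q^2))^2))
     = K * ((1-v)*(1-q^3*u)*(1-t*q^2)*(1-t*q^3)^2 / (t*q^2))"
    unfolding K_def Den_def using nz by (simp add: divide_simps)
  have e2: "\<And>X. X * G1 * G2 * (t*q^2) / Den = K * X" unfolding K_def by (simp add: mult_ac)
  have r: "(1-v)*G1*(1-t*q*v)*(1-q^3*u)*G2*(1-t*q^4*u)*(t*q^2)/Den = K * ((1-v)*(1-t*q*v)*(1-q^3*u)*(1-t*q^4*u))"
    "(1-v/q)*(1-v)*G1*G2*(1-t*q^4*u)*(1-t*q^5*u)*(t*q^2)/Den = K * ((1-v/q)*(1-v)*(1-t*q^4*u)*(1-t*q^5*u))"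
    "G1*(1-t*q*v)*(1-t*q^2*v)*(1-q^2*u)*(1-q^3*u)*G2*(t*q^2)/Den = K * ((1-t*q*v)*(1-t*q^2*v)*(1-q^2*u)*(1-q^3*u))"
    unfolding K_def by (simp_all add: mult_ac)
  have rr: "(inverse (t*q^2) - 1) * ((1-v)*(1-t*q*v)*(1-q^3*u)*(1-t*q^4*u))
          - (1-v)*(1-q^3*u)*(1-t*q^2)*(1-t*q^3)^2 / (t*q^2)
       = A * ((1-v/q)*(1-v)*(1-t*q^4*u)*(1-t*q^5*u))
         - (A + C) * ((1-v)*(1-t*q*v)*(1-q^3*u)*(1-t*q^4*u))
         + C * ((1-t*q*v)*(1-t*q^2*v)*(1-q^2*u)*(1-q^3*u))"
    unfolding v_def A_def C_def by (rule rec_red[OF nz(1-3) nz(9-11)])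
  show ?thesis
    unfolding e1 r by (rule lin3[OF rr])
qed




lemma qpoch_nz_gen': "(\<And>i. i < k \<Longrightarrow> 1 - q ^ i * a \<noteq> 0) \<Longrightarrow> qpoch a q k \<noteq> (0::'a::field)"
  unfolding qpoch_def by auto

lemma qSS1: "qpoch a q (Suc (Suc j)) = (1-a)*(1-q*a)*qpoch (q*(q*a)) q j"
  by (simp add: qpoch_Suc' mult_ac)
lemma qSS2: "qpoch a q (Suc (Suc j)) = (1-a)*(qpoch (q*a) q j*(1 - q^j*(q*a)))"
  by (subst qpoch_Suc') (simp only: qpoch_Suc)
lemma qSS3: "qpoch a q (Suc (Suc j)) = qpoch a q j*(1 - q^j*a)*(1 - q^j*q*a)"
  by (simp add: qpoch_Suc mult_ac)

definition alpha :: "'a::field \<Rightarrow> 'a \<Rightarrow> 'a \<Rightarrow> nat \<Rightarrow> 'a" where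
  "alpha q v w k = qpoch v q k * qpoch w q k * q ^ k / (qpoch q q k * qpoch (q^2) q k * qpoch (q^2) q k)"

lemma rec_coef:
  fixes q u :: "'a::field"
  assumes q0: "q \<noteq> 0" and u0: "u \<noteq> 0" and qi: "\<And>i. 1 - q ^ Suc i \<noteq> 0"
    and nz: "1 - q^3*u^2 \<noteq> 0" "1 - q^4*u^2 \<noteq> 0" "1 - q^2*u^2 \<noteq> 0"
  defines "v \<equiv> inverse u"
  defines "A \<equiv> (1-q^2*u)^2*(1-q^3*u)/((1-q^3*u^2)*(1-q^4*u^2))"
  defines "C \<equiv> - (q^3*u*(1-u)*(1-q*u)^2/((1-q^2*u^2)*(1-q^3*u^2)))"
  shows "(inverse q ^ k - 1) * alpha q v (q^3*u) k - (if k = 0 then 0 else inverse q ^ (k - 1) * alpha q v (q^3*u) (k - 1))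
   = A * alpha q (v * inverse q) (q^4*u) k - (A + C) * alpha q v (q^3*u) k + C * alpha q (q*v) (q^2*u) k"
proof (cases k)
  case 0 then show ?thesis by (simp add: alpha_def)
next
  case (Suc j)
  note kj = Suc
  have q1: "1 - q \<noteq> 0" using qi[of 0] by simp
  have q2: "1 - q^2 \<noteq> 0" using qi[of 1] by (simp add: power2_eq_square)
  show ?thesis
  proof (cases j)
    case 0
    have k1: "k = Suc 0" using kj 0 by simp
    show ?thesis unfolding k1 A_def C_def v_def alpha_def using q0 u0 q1 q2 nz
      by (simp add: qpoch_Suc divide_simps) algebra
  next
    case (Suc i)
    have kk: "k = Suc (Suc i)" using kj Suc by simp
    define t where "t = q ^ i"
    define G1 where "G1 = qpoch (q*v) q i"
    define G2 where "G2 = qpoch (q^4*u) q i"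
    define D1 where "D1 = qpoch q q i"
    define D2 where "D2 = qpoch (q^2) q i"
    have t0: "t \<noteq> 0" using q0 by (simp add: t_def)
    have qt1: "1 - t*q \<noteq> 0" using qi[of i] by (simp add: t_def mult.commute)
    have qt2: "1 - t*q^2 \<noteq> 0" using qi[of "Suc i"] by (simp add: t_def mult_ac power2_eq_square)
    have qt3: "1 - t*q^3 \<noteq> 0" using qi[of "Suc (Suc i)"] by (simp add: t_def mult_ac power3_eq_cube)
    have D10: "D1 \<noteq> 0" unfolding D1_def by (rule qpoch_nz_gen') (metis qi power_Suc2)
    have D20: "D2 \<noteq> 0" unfolding D2_def
      by (rule qpoch_nz_gen') (metis qi power_Suc2 power_add mult.commute add_Suc_right add_2_eq_Suc' numeral_2_eq_2)
    have qv: "q * (v * inverse q) = v" using q0 by simp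
    have p1: "qpoch (v*inverse q) q (Suc (Suc i)) = (1 - v/q)*(1-v)*G1"
      unfolding qSS1 qv G1_def by (simp add: divide_inverse)
    have p2: "qpoch (q^4*u) q (Suc (Suc i)) = G2*(1 - t*q^4*u)*(1-t*q^5*u)"
      unfolding qSS3 G2_def t_def by (simp add: mult_ac eval_nat_numeral)
    have p3: "qpoch v q (Suc (Suc i)) = (1-v)*(G1*(1 - t*q*v))"
      unfolding qSS2 G1_def t_def by (simp add: mult_ac)
    have p4: "qpoch (q^3*u) q (Suc (Suc i)) = (1-q^3*u)*(G2*(1 - t*q^4*u))"
      unfolding qSS2 G2_def t_def by (simp add: mult_ac eval_nat_numeral)
    have p5: "qpoch (q*v) q (Suc (Suc i)) = G1*(1-t*q*v)*(1-t*q^2*v)"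
      unfolding qSS3 G1_def t_def by (simp add: mult_ac eval_nat_numeral)
    have p6: "qpoch (q^2*u) q (Suc (Suc i)) = (1-q^2*u)*(1-q^3*u)*G2"
      unfolding qSS1 G2_def by (simp add: mult_ac eval_nat_numeral)
    have p7: "qpoch q q (Suc (Suc i)) = D1*(1-t*q)*(1-t*q^2)"
      unfolding qSS3 D1_def t_def by (simp add: mult_ac eval_nat_numeral)
    have p8: "qpoch (q^2) q (Suc (Suc i)) = D2*(1-t*q^2)*(1-t*q^3)"
      unfolding qSS3 D2_def t_def by (simp add: mult_ac eval_nat_numeral)
    have p9: "qpoch v q (Suc i) = (1-v)*G1" unfolding qpoch_Suc' G1_def ..
    have p10: "qpoch (q^3*u) q (Suc i) = (1-q^3*u)*G2"
      unfolding qpoch_Suc' G2_def by (simp add: mult_ac eval_nat_numeral)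
    have p11: "qpoch q q (Suc i) = D1*(1-t*q)" unfolding qpoch_Suc D1_def t_def ..
    have p12: "qpoch (q^2) q (Suc i) = D2*(1-t*q^2)" unfolding qpoch_Suc D2_def t_def ..
    have w1: "q ^ Suc (Suc i) = t*q^2" "q ^ Suc i = t*q" by (simp_all add: t_def mult_ac power2_eq_square)
    have w2: "inverse q ^ Suc (Suc i) = inverse (t*q^2)" "inverse q ^ Suc i = inverse (t*q)"
      by (simp_all add: t_def power_inverse mult_ac power2_eq_square)
    define Den where "Den = D1*(1-t*q)*(1-t*q^2)*(D2*(1-t*q^2)*(1-t*q^3))^2"
    have a1: "alpha q (v * inverse q) (q^4*u) k = (1-v/q)*(1-v)*G1*G2*(1-t*q^4*u)*(1-t*q^5*u)*(t*q^2)/Den"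
      unfolding kk alpha_def p1 p2 p7 p8 w1 Den_def by (simp add: power2_eq_square mult_ac)
    have a2: "alpha q v (q^3*u) k = (1-v)*G1*(1-t*q*v)*(1-q^3*u)*G2*(1-t*q^4*u)*(t*q^2)/Den"
      unfolding kk alpha_def p3 p4 p7 p8 w1 Den_def by (simp add: power2_eq_square mult_ac)
    have a3: "alpha q (q*v) (q^2*u) k = G1*(1-t*q*v)*(1-t*q^2*v)*(1-q^2*u)*(1-q^3*u)*G2*(t*q^2)/Den"
      unfolding kk alpha_def p5 p6 p7 p8 w1 Den_def by (simp add: power2_eq_square mult_ac)
    have a4: "alpha q v (q^3*u) (k - 1) = (1-v)*G1*(1-q^3*u)*G2*(t*q)/(D1*(1-t*q)*(D2*(1-t*q^2))^2)"
      unfolding kk diff_Suc_1 alpha_def p9 p10 p11 p12 w1 by (simp add: power2_eq_square mult_ac)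
    have ik: "inverse q ^ k = inverse (t*q^2)" "inverse q ^ (k - 1) = inverse (t*q)" "k \<noteq> 0"
      unfolding kk using w2 by simp_all
    show ?thesis
      unfolding a1 a2 a3 a4 ik if_not_P[OF ik(3)]
      unfolding v_def A_def C_def Den_def
      by (rule rec_atoms[OF q0 u0 t0 D10 D20 qt1 qt2 qt3 nz])
  qed
qed




definition acoef :: "nat \<Rightarrow> nat \<Rightarrow> qf" where
  "acoef n k = alpha qq (inverse qq ^ n) (qq ^ (n + 3)) k"

lemma P_acoef: "P_qhahn n = (\<Sum>k\<le>n. smult (acoef n k) (Y k))"
  unfolding P_qhahn_Y acoef_def alpha_def ..

lemma acoef_zero: "n < k \<Longrightarrow> acoef n k = 0"
proof -
  assume nk: "n < k"
  have "qpoch (inverse qq ^ n) qq k = 0"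
    unfolding qpoch_def
  proof (rule prod_zero)
    have "1 - qq ^ n * inverse qq ^ n = 0" by (simp add: power_inverse)
    then show "\<exists>i\<in>{..<k}. 1 - qq ^ i * inverse qq ^ n = 0" using nk by (intro bexI[of _ n]) auto
  qed simp
  then show ?thesis by (simp add: acoef_def alpha_def)
qed

lemma P_acoef_N: "n \<le> N \<Longrightarrow> P_qhahn n = (\<Sum>k\<le>N. smult (acoef n k) (Y k))"
  unfolding P_acoef
  by (rule sum.mono_neutral_left) (auto simp: acoef_zero)

lemma X1Y: "[:qq - 1, qq * (qq - 1):] * Y k = smult (inverse qq ^ k - 1) (Y k) - smult (inverse qq ^ k) (Y (Suc k))"
proof -
  define X where "X = [:qq, qq * (qq - 1):]"
  have X1: "[:qq - 1, qq * (qq - 1):] = X - 1" by (simp add: X_def one_pCons)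
  have ys: "Y (Suc k) = Y k - smult (qq ^ k) (X * Y k)"
    unfolding Y_Suc X_def[symmetric] by (simp add: algebra_simps)
  have "smult (inverse qq ^ k - 1) (Y k) - smult (inverse qq ^ k) (Y (Suc k))
      = smult (inverse qq ^ k - 1) (Y k) - smult (inverse qq ^ k) (Y k) + smult (inverse qq ^ k * qq ^ k) (X * Y k)"
    unfolding ys by (simp add: smult_diff_right)
  also have "\<dots> = X * Y k - Y k"
    by (simp add: power_inverse smult_diff_left)
  finally show ?thesis unfolding X1 by (simp add: algebra_simps)
qed

definition Aq :: "nat \<Rightarrow> qf" where
  "Aq n = (1-qq^2*qq^n)^2*(1-qq^3*qq^n)/((1-qq^3*(qq^n)^2)*(1-qq^4*(qq^n)^2))"
definition Cq :: "nat \<Rightarrow> qf" where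
  "Cq n = - (qq^3*qq^n*(1-qq^n)*(1-qq*qq^n)^2/((1-qq^2*(qq^n)^2)*(1-qq^3*(qq^n)^2)))"

lemma qq_pow_form: "a > 0 \<Longrightarrow> 1 - qq ^ a * (qq ^ n) ^ 2 \<noteq> 0"
proof -
  have "qq ^ a * (qq ^ n) ^ 2 = qq ^ (a + 2 * n)" by (simp add: power_add power_mult mult.commute)
  moreover assume "a > 0"
  ultimately show ?thesis using one_minus_qq_pow_nz[of "a + 2*n"] by simp
qed

lemma coef_rec: "(inverse qq ^ k - 1) * acoef n k - (if k = 0 then 0 else inverse qq ^ (k - 1) * acoef n (k - 1))
   = Aq n * acoef (Suc n) k - (Aq n + Cq n) * acoef n k + Cq n * acoef (n - 1) k"
proof -
  define u where "u = qq ^ n"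
  have u0: "u \<noteq> 0" by (simp add: u_def)
  have qi: "\<And>i. 1 - qq ^ Suc i \<noteq> 0" by (rule one_minus_qq_pow_nz) simp
  have nz: "1 - qq^3*u^2 \<noteq> 0" "1 - qq^4*u^2 \<noteq> 0" "1 - qq^2*u^2 \<noteq> 0"
    unfolding u_def by (rule qq_pow_form, simp)+
  note R = rec_coef[OF qq_nz u0 qi nz, of k]
  have e0: "\<And>k'. acoef n k' = alpha qq (inverse u) (qq^3*u) k'"
    by (simp add: acoef_def u_def power_inverse power_add mult.commute)
  have e1: "acoef (Suc n) k = alpha qq (inverse u * inverse qq) (qq^4*u) k"
    by (simp add: acoef_def u_def power_inverse power_add mult.commute)
  have e2: "Cq n * acoef (n - 1) k = Cq n * alpha qq (qq * inverse u) (qq^2*u) k"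
  proof (cases n)
    case 0 then show ?thesis by (simp add: Cq_def)
  next
    case (Suc m)
    have "inverse qq ^ m = qq * inverse u" by (simp add: u_def Suc power_inverse)
    moreover have "qq ^ (m + 3) = qq ^ 2 * u" by (simp add: u_def Suc power_add eval_nat_numeral mult_ac)
    ultimately show ?thesis by (simp add: acoef_def Suc)
  qed
  have ea: "Aq n = (1-qq^2*u)^2*(1-qq^3*u)/((1-qq^3*u^2)*(1-qq^4*u^2))" by (simp add: Aq_def u_def)
  have ec: "Cq n = - (qq^3*u*(1-u)*(1-qq*u)^2/((1-qq^2*u^2)*(1-qq^3*u^2)))" by (simp add: Cq_def u_def)
  show ?thesis
    unfolding e0 e1 e2 using R unfolding ea ec by simp
qed

lemma smult_sum_r: "smult c (\<Sum>i\<in>S. f i) = (\<Sum>i\<in>S. smult c (f i))"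
  by (induct S rule: infinite_finite_induct) (auto simp: smult_add_right)

lemma rec_P: "[:qq - 1, qq * (qq - 1):] * P_qhahn n =
   smult (Aq n) (P_qhahn (Suc n)) - smult (Aq n + Cq n) (P_qhahn n) + smult (Cq n) (P_qhahn (n - 1))"
proof -
  define N where "N = Suc n"
  define X1 where "X1 = [:qq - 1, qq * (qq - 1):]"
  define e where "e k = (if k = 0 then 0 else inverse qq ^ (k - 1) * acoef n (k - 1))" for k
  have nN: "n \<le> N" "Suc n \<le> N" "n - 1 \<le> N" by (simp_all add: N_def)
  have sh: "(\<Sum>k\<le>N. smult (acoef n k * inverse qq ^ k) (Y (Suc k))) = (\<Sum>k\<le>N. smult (e k) (Y k))"
  proof -
    have "(\<Sum>k\<le>Suc N. smult (e k) (Y k)) = smult (e 0) (Y 0) + (\<Sum>k\<le>N. smult (e (Suc k)) (Y (Suc k)))"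
      by (rule sum.atMost_Suc_shift)
    also have "\<dots> = (\<Sum>k\<le>N. smult (acoef n k * inverse qq ^ k) (Y (Suc k)))"
      by (simp add: e_def mult.commute)
    finally have "(\<Sum>k\<le>N. smult (acoef n k * inverse qq ^ k) (Y (Suc k))) = (\<Sum>k\<le>N. smult (e k) (Y k)) + smult (e (Suc N)) (Y (Suc N))"
      by simp
    moreover have "e (Suc N) = 0" by (simp add: e_def N_def acoef_zero)
    ultimately show ?thesis by simp
  qed
  have "X1 * P_qhahn n = (\<Sum>k\<le>N. smult (acoef n k) (X1 * Y k))"
    unfolding P_acoef_N[OF nN(1)]
    by (simp add: sum_distrib_left mult_smult_right)
  also have "\<dots> = (\<Sum>k\<le>N. smult (acoef n k * (inverse qq ^ k - 1)) (Y k)) - (\<Sum>k\<le>N. smult (acoef n k * inverse qq ^ k) (Y (Suc k)))"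
    unfolding X1_def X1Y by (simp add: smult_diff_right sum_subtractf)
  also have "\<dots> = (\<Sum>k\<le>N. smult ((inverse qq ^ k - 1) * acoef n k - e k) (Y k))"
    unfolding sh by (simp add: sum_subtractf smult_diff_left mult.commute)
  also have "\<dots> = (\<Sum>k\<le>N. smult (Aq n * acoef (Suc n) k - (Aq n + Cq n) * acoef n k + Cq n * acoef (n - 1) k) (Y k))"
    unfolding e_def using coef_rec by presburger
  also have "\<dots> = smult (Aq n) (P_qhahn (Suc n)) - smult (Aq n + Cq n) (P_qhahn n) + smult (Cq n) (P_qhahn (n - 1))"
    unfolding P_acoef_N[OF nN(2)] P_acoef_N[OF nN(1)] P_acoef_N[OF nN(3)]
    by (simp add: smult_sum_r smult_smult sum.distrib sum_subtractf smult_add_left smult_diff_left)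
  finally show ?thesis unfolding X1_def .
qed




lemma favard_vanish:
  fixes m :: "nat \<Rightarrow> 'a::field" and P :: "nat \<Rightarrow> 'a poly"
  assumes rec: "\<And>n. [:0,1:] * P n = smult (al n) (P (Suc n)) + smult (ga n) (P n) + smult (de n) (P (n - 1))"
    and z: "\<And>n. n > 0 \<Longrightarrow> moment_functional m (P n) = 0"
  shows "j < n \<Longrightarrow> moment_functional m ([:0,1:] ^ j * P n) = 0"
proof (induct j arbitrary: n)
  case 0 then show ?case by (simp add: z)
next
  case (Suc j)
  have "[:0,1:] ^ Suc j * P n = [:0,1:] ^ j * ([:0,1:] * P n)" by (simp add: mult_ac)
  also have "\<dots> = smult (al n) ([:0,1:] ^ j * P (Suc n)) + smult (ga n) ([:0,1:] ^ j * P n) + smult (de n) ([:0,1:] ^ j * P (n - 1))"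
    unfolding rec by (simp add: distrib_left mult_smult_right)
  finally show ?case using Suc by (simp add: mf_add mf_smult)
qed

lemma favard_top:
  fixes m :: "nat \<Rightarrow> 'a::field" and P :: "nat \<Rightarrow> 'a poly"
  assumes rec: "\<And>n. [:0,1:] * P n = smult (al n) (P (Suc n)) + smult (ga n) (P n) + smult (de n) (P (n - 1))"
    and z: "\<And>n. n > 0 \<Longrightarrow> moment_functional m (P n) = 0"
  shows "moment_functional m ([:0,1:] ^ n * P n) = (\<Prod>i<n. de (Suc i)) * moment_functional m (P 0)"
proof (induct n)
  case 0 then show ?case by simp
next
  case (Suc n)
  have "[:0,1:] ^ Suc n * P (Suc n) = [:0,1:] ^ n * ([:0,1:] * P (Suc n))" by (simp add: mult_ac)
  also have "\<dots> = smult (al (Suc n)) ([:0,1:] ^ n * P (Suc (Suc n))) + smult (ga (Suc n)) ([:0,1:] ^ n * P (Suc n)) + smult (de (Suc n)) ([:0,1:] ^ n * P n)"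
    unfolding rec by (simp add: distrib_left mult_smult_right)
  finally show ?case using Suc favard_vanish[OF rec z, of n "Suc n"] favard_vanish[OF rec z, of n "Suc (Suc n)"]
    by (simp add: mf_add mf_smult mult_ac)
qed

lemma ortho_low:
  fixes m :: "nat \<Rightarrow> 'a::field" and P :: "nat \<Rightarrow> 'a poly"
  assumes v: "\<And>j. j < n \<Longrightarrow> moment_functional m ([:0,1:] ^ j * P n) = 0"
    and d: "degree p < n"
  shows "moment_functional m (p * P n) = 0"
proof -
  have "p * P n = (\<Sum>i\<le>degree p. smult (coeff p i) ([:0,1:] ^ i * P n))"
    by (subst (1) poly_as_sum_of_monoms[symmetric])
       (simp add: sum_distrib_right monom_altdef mult_smult_left)
  then show ?thesis using v d by (simp add: mf_sum mf_smult)
qed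

lemma ortho_top:
  fixes m :: "nat \<Rightarrow> 'a::field" and P :: "nat \<Rightarrow> 'a poly"
  assumes v: "\<And>j. j < n \<Longrightarrow> moment_functional m ([:0,1:] ^ j * P n) = 0"
    and d: "degree (P n) = n"
  shows "moment_functional m (P n * P n) = coeff (P n) n * moment_functional m ([:0,1:] ^ n * P n)"
proof -
  have "P n * P n = (\<Sum>i\<le>n. smult (coeff (P n) i) ([:0,1:] ^ i * P n))"
    by (subst (1) poly_as_sum_of_monoms[symmetric])
       (simp add: d sum_distrib_right monom_altdef mult_smult_left)
  also have "moment_functional m \<dots> = (\<Sum>i\<le>n. coeff (P n) i * moment_functional m ([:0,1:] ^ i * P n))"
    by (simp add: mf_sum mf_smult)
  also have "\<dots> = coeff (P n) n * moment_functional m ([:0,1:] ^ n * P n)"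
  proof (cases n)
    case 0 then show ?thesis by simp
  next
    case (Suc k)
    have "(\<Sum>i\<le>k. coeff (P n) i * moment_functional m ([:0,1:] ^ i * P n)) = 0"
    proof (rule sum.neutral, rule ballI)
      fix i assume "i \<in> {..k}"
      then have "i < n" using Suc by auto
      then show "coeff (P n) i * moment_functional m ([:0,1:] ^ i * P n) = 0" using v by simp
    qed
    then show ?thesis unfolding Suc sum.atMost_Suc by simp
  qed
  finally show ?thesis .
qed




lemma Y_deg: "degree (Y k) = k \<and> coeff (Y k) k \<noteq> 0"
proof (induct k)
  case 0 then show ?case by (simp add: Y0)
next
  case (Suc k)
  define F where "F = 1 - [:qq ^ k:] * [:qq, qq * (qq - 1):]"
  have F: "F = [:1 - qq ^ k * qq, - (qq ^ k * (qq * (qq - 1))):]" by (simp add: F_def one_pCons)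
  have c: "qq ^ k * (qq * (qq - 1)) \<noteq> 0" using qq_pow_ne1[of 1] by simp
  have dF: "degree F = 1" unfolding F using c by simp
  have cF: "coeff F 1 \<noteq> 0" unfolding F using c by simp
  have Yn: "Y k \<noteq> 0" using Suc by auto
  have Fn: "F \<noteq> 0" using dF by auto
  have d: "degree (Y (Suc k)) = Suc k" unfolding Y_Suc F_def[symmetric]
    using degree_mult_eq[OF Yn Fn] dF Suc by simp
  have "coeff (Y (Suc k)) (Suc k) = lead_coeff (Y k) * lead_coeff F"
    using d unfolding Y_Suc F_def[symmetric] by (metis lead_coeff_mult)
  then show ?case using d Suc dF cF by simp
qed

lemma acoef_nn: "acoef n n \<noteq> 0"
proof -
  have a: "qpoch (inverse qq ^ n) qq n \<noteq> 0"
  proof (rule qpoch_nz_gen)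
    fix i assume i: "i < n"
    have "qq ^ i * inverse qq ^ n = inverse (qq ^ (n - i))"
      using i by (simp add: power_inverse[symmetric] power_diff_conv_inverse)
    moreover have "qq ^ (n - i) \<noteq> 1" using qq_pow_ne1 i by simp
    ultimately show "1 - qq ^ i * inverse qq ^ n \<noteq> 0" by (metis inverse_1 inverse_inverse_eq right_minus_eq)
  qed
  have b: "qpoch (qq ^ (n + 3)) qq n \<noteq> 0" by (rule qpoch_qqpow_nz) simp
  have c: "qpoch qq qq n \<noteq> 0" by (rule qpoch_qq_nz)
  have d: "qpoch (qq ^ 2) qq n \<noteq> 0" by (rule qpoch_qqpow_nz) simp
  show ?thesis unfolding acoef_def alpha_def using a b c d by simp
qed

lemma P_deg: "degree (P_qhahn n) = n" and P_lc: "coeff (P_qhahn n) n \<noteq> 0"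
proof -
  have le: "degree (P_qhahn n) \<le> n"
    unfolding P_acoef
    by (rule degree_sum_le) (auto intro: order.trans[OF degree_smult_le] simp: Y_deg)
  have "coeff (P_qhahn n) n = (\<Sum>k\<le>n. acoef n k * coeff (Y k) n)"
    unfolding P_acoef by (simp add: coeff_sum)
  also have "\<dots> = acoef n n * coeff (Y n) n"
  proof -
    have "(\<Sum>k\<le>n. acoef n k * coeff (Y k) n) = (\<Sum>k\<in>{n}. acoef n k * coeff (Y k) n)"
    proof (rule sum.mono_neutral_right)
      show "\<forall>i\<in>{..n} - {n}. acoef n i * coeff (Y i) n = 0"
        using Y_deg by (auto simp: coeff_eq_0)
    qed auto
    then show ?thesis by simp
  qed
  finally have "coeff (P_qhahn n) n \<noteq> 0" using acoef_nn Y_deg by simp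
  then show "coeff (P_qhahn n) n \<noteq> 0" .
  then show "degree (P_qhahn n) = n" using le le_degree by (metis antisym)
qed

lemma P0: "P_qhahn 0 = 1"
  unfolding P_acoef by (simp add: acoef_def alpha_def Y0)

definition cc :: qf where "cc = qq * (qq - 1)"

lemma x_rec: "[:0,1:] * P_qhahn n = smult (Aq n / cc) (P_qhahn (Suc n))
   + smult (- (Aq n + Cq n) / cc - (qq - 1) / cc) (P_qhahn n) + smult (Cq n / cc) (P_qhahn (n - 1))"
proof -
  have c0: "cc \<noteq> 0" using qq_pow_ne1[of 1] by (simp add: cc_def)
  have x: "[:0,1:] = smult (1 / cc) ([:qq - 1, qq * (qq - 1):] - [:qq - 1:])"
    using c0 by (simp add: cc_def)
  have "[:0,1:] * P_qhahn n = smult (1 / cc) ([:qq - 1, qq * (qq - 1):] * P_qhahn n - smult (qq - 1) (P_qhahn n))"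
    by (subst x) (simp add: mult_smult_left left_diff_distrib)
  also have "\<dots> = smult (1 / cc) ([:qq - 1, qq * (qq - 1):] * P_qhahn n) - smult ((qq - 1) / cc) (P_qhahn n)"
  proof -
    have e: "1 / cc * (qq - 1) = (qq - 1) / cc" by simp
    show ?thesis by (simp only: smult_diff_right smult_smult e)
  qed
  also have "\<dots> = smult (Aq n / cc) (P_qhahn (Suc n))
   + smult (- (Aq n + Cq n) / cc - (qq - 1) / cc) (P_qhahn n) + smult (Cq n / cc) (P_qhahn (n - 1))"
    unfolding rec_P by (simp add: smult_add_right smult_diff_right smult_diff_left smult_add_left diff_divide_distrib add_divide_distrib)
  finally show ?thesis .
qed

lemma Cq_nz: "n > 0 \<Longrightarrow> Cq n \<noteq> 0"
proof -
  assume n: "n > 0"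
  have "1 - qq ^ n \<noteq> 0" using one_minus_qq_pow_nz n by simp
  moreover have "1 - qq * qq ^ n \<noteq> 0" using one_minus_qq_pow_nz[of "Suc n"] by simp
  moreover have "1 - qq^2*(qq^n)^2 \<noteq> 0" "1 - qq^3*(qq^n)^2 \<noteq> 0" by (rule qq_pow_form, simp)+
  ultimately show ?thesis by (simp add: Cq_def)
qed




theorem mainTheorem3:
  fixes \<beta> :: "nat \<Rightarrow> qf"
  assumes "\<forall>n. qq * (\<Sum>k\<le>n. of_nat (n choose k) * qq ^ k * \<beta> k) - \<beta> n =
              (if n = 0 then qq - 1 else if n = 1 then 1 else 0)"
  shows "is_moment_sequence (\<lambda>n. \<beta> (n + 2) / \<beta> 2) P_qhahn"
proof -
  note H = assms
  define m where "m = (\<lambda>n. \<beta> (n + 2) / \<beta> 2)"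
  have z: "\<And>n. n > 0 \<Longrightarrow> moment_functional m (P_qhahn n) = 0"
    unfolding m_def by (rule LP0[OF H])
  have v: "\<And>j n. j < n \<Longrightarrow> moment_functional m ([:0,1:] ^ j * P_qhahn n) = 0"
    by (rule favard_vanish[where al = "\<lambda>n. Aq n / cc" and ga = "\<lambda>n. - (Aq n + Cq n) / cc - (qq - 1) / cc"
          and de = "\<lambda>n. Cq n / cc", OF x_rec z])
  have top: "\<And>n. moment_functional m ([:0,1:] ^ n * P_qhahn n) = (\<Prod>i<n. Cq (Suc i) / cc) * moment_functional m (P_qhahn 0)"
    by (rule favard_top[where al = "\<lambda>n. Aq n / cc" and ga = "\<lambda>n. - (Aq n + Cq n) / cc - (qq - 1) / cc"
          and de = "\<lambda>n. Cq n / cc", OF x_rec z])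
  have m0: "m 0 = 1" unfolding m_def using beta2_nz[OF H] by (simp add: numeral_2_eq_2)
  have mP0: "moment_functional m (P_qhahn 0) = 1" unfolding P0 mf_1 m0 ..
  have cc0: "cc \<noteq> 0" using qq_pow_ne1[of 1] by (simp add: cc_def)
  have orth: "moment_functional m (P_qhahn i * P_qhahn j) = 0" if "i < j" for i j
    by (rule ortho_low[OF v]) (simp_all add: P_deg that)
  show ?thesis
    unfolding is_moment_sequence_def m_def[symmetric]
  proof (intro conjI allI impI)
    show "m 0 = 1" by (rule m0)
  next
    fix n show "degree (P_qhahn n) = n" by (rule P_deg)
  next
    fix i j :: nat assume "i \<noteq> j"
    then consider "i < j" | "j < i" by linarith
    then show "moment_functional m (P_qhahn i * P_qhahn j) = 0"
    proof cases
      case 1 then show ?thesis by (rule orth)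
    next
      case 2 then show ?thesis using orth[of j i] by (simp add: mult.commute)
    qed
  next
    fix n
    have "moment_functional m (P_qhahn n * P_qhahn n) = coeff (P_qhahn n) n * ((\<Prod>i<n. Cq (Suc i) / cc) * 1)"
      using ortho_top[where P = P_qhahn and m = m and n = n, OF v[of _ n] P_deg[of n]] top[of n] mP0 by simp
    moreover have "(\<Prod>i<n. Cq (Suc i) / cc) \<noteq> 0" using Cq_nz cc0 by simp
    ultimately show "moment_functional m (P_qhahn n * P_qhahn n) \<noteq> 0" using P_lc by simp
  qed
qed


end
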